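(* Let $(X,\mathscr{A},\mu)$ be a $\sigma$-finite measure space and $\phi$ a nonsingular transformation of $X$ such that $C_\phi$ is quasinormal. Then there exists a $\phi^{-1}(\mathscr{A})$-measurable family $P\colon X\times\mathfrak{B}(\mathbb{R}_+)\to[0,1]$ of probability measures satisfying (CC): $\mathsf{E}(P(\cdot,\sigma))(x)=\dfrac{\int_\sigma t\,P(\phi(x),\mathrm{d}t)}{\mathsf{h}_\phi(\phi(x))}$ for $\mu$-a.e. $x\in X$, for every $\sigma\in\mathfrak{B}(\mathbb{R}_+)$. Moreover, if $\widetilde P\colon X\times\mathfrak{B}(\mathbb{R}_+)\to[0,1]$ is any $\mathscr{A}$-measurable family of probability measures satisfying (CC) (with $\widetilde P$ in place of $P$), then $\widetilde P(x,\cdot)=P(x,\cdot)$ for $\mu$-a.e. $x\in X$.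
   Context: $\mathbb{R}_+=[0,\infty)$. Conventions: $0\cdot\infty=0$, $1/0=\infty$, $0/0=1$. Nonsingular: $\phi^{-1}(\Delta)\in\mathscr{A}$ for $\Delta\in\mathscr{A}$ and $\mu(\phi^{-1}(\Delta))=0$ when $\mu(\Delta)=0$. $C_\phi f=f\circ\phi$ on $\{f\in L^2(\mu):f\circ\phi\in L^2(\mu)\}$; a closed densely defined operator $A$ with polar decomposition $A=U|A|$ is quasinormal if $U|A|\subseteq|A|U$ (quasinormality of $C_\phi$ entails that $C_\phi$ is densely defined, hence $\mathsf{h}_\phi<\infty$ a.e.). $\mathsf{h}_\phi$ is the Radon–Nikodym derivative of $\mu\circ\phi^{-1}$ w.r.t. $\mu$. $\mathsf{E}(f)$, for $\mathscr{A}$-measurable $f\ge0$, is the conditional expectation w.r.t. $\phi^{-1}(\mathscr{A})$: the a.e. unique $\phi^{-1}(\mathscr{A})$-measurable function with $\int(g\circ\phi)f\,\mathrm{d}\mu=\int(g\circ\phi)\mathsf{E}(f)\,\mathrm{d}\mu$ for all $\mathscr{A}$-measurable $g\ge0$. A $\mathscr{B}$-measurable family of probability measures ($\mathscr{B}$ a $\sigma$-algebra on $X$): each $P(x,\cdot)$ is a Borel probability measure on $\mathbb{R}_+$ and each $P(\cdot,\sigma)$ is $\mathscr{B}$-measurable. *)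

theory Defs
  imports "HOL-Probability.Probability"
begin

definition L2 :: "'a measure \<Rightarrow> ('a \<Rightarrow> complex) set" where
  "L2 M = {f. f \<in> borel_measurable M \<and> integrable M (\<lambda>x. (cmod (f x))\<^sup>2)}"

definition aeq :: "'a measure \<Rightarrow> ('a \<Rightarrow> complex) \<Rightarrow> ('a \<Rightarrow> complex) \<Rightarrow> bool" where
  "aeq M f g \<longleftrightarrow> (AE x in M. f x = g x)"

definition ip :: "'a measure \<Rightarrow> ('a \<Rightarrow> complex) \<Rightarrow> ('a \<Rightarrow> complex) \<Rightarrow> complex" where
  "ip M f g = (LINT x|M. f x * cnj (g x))"

definition l2norm :: "'a measure \<Rightarrow> ('a \<Rightarrow> complex) \<Rightarrow> real" where
  "l2norm M f = sqrt (LINT x|M. (cmod (f x))\<^sup>2)"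

text \<open>(Possibly unbounded) linear operators in L2(mu) are represented by their graphs,
  as relations on square-integrable representatives, saturated w.r.t. a.e. equality.
  Composition "S T" (first T, then S) is the relational composition  T O S.\<close>

type_synonym 'a op = "(('a \<Rightarrow> complex) \<times> ('a \<Rightarrow> complex)) set"

definition is_operator :: "'a measure \<Rightarrow> 'a op \<Rightarrow> bool" where
  "is_operator M A \<longleftrightarrow>
     A \<subseteq> L2 M \<times> L2 M \<and>
     (\<forall>f g f' g'. (f, g) \<in> A \<longrightarrow> f' \<in> L2 M \<longrightarrow> g' \<in> L2 M \<longrightarrow> aeq M f f' \<longrightarrow> aeq M g g'
        \<longrightarrow> (f', g') \<in> A) \<and>
     (\<forall>f g g'. (f, g) \<in> A \<longrightarrow> (f, g') \<in> A \<longrightarrow> aeq M g g') \<and>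
     (\<forall>f g f' g'. (f, g) \<in> A \<longrightarrow> (f', g') \<in> A \<longrightarrow> ((\<lambda>x. f x + f' x), (\<lambda>x. g x + g' x)) \<in> A) \<and>
     (\<forall>f g (c::complex). (f, g) \<in> A \<longrightarrow> ((\<lambda>x. c * f x), (\<lambda>x. c * g x)) \<in> A)"

definition densely_defined :: "'a measure \<Rightarrow> 'a op \<Rightarrow> bool" where
  "densely_defined M A \<longleftrightarrow>
     (\<forall>f \<in> L2 M. \<forall>\<epsilon>>0. \<exists>g \<in> Domain A. l2norm M (\<lambda>x. f x - g x) < \<epsilon>)"

definition closed_op :: "'a measure \<Rightarrow> 'a op \<Rightarrow> bool" where
  "closed_op M A \<longleftrightarrow>
     (\<forall>F G f g. (\<forall>n. (F n, G n) \<in> A) \<longrightarrow> f \<in> L2 M \<longrightarrow> g \<in> L2 M \<longrightarrow>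
        (\<lambda>n. l2norm M (\<lambda>x. F n x - f x)) \<longlonglongrightarrow> 0 \<longrightarrow> (\<lambda>n. l2norm M (\<lambda>x. G n x - g x)) \<longlonglongrightarrow> 0 \<longrightarrow>
        (f, g) \<in> A)"

definition adjoint :: "'a measure \<Rightarrow> 'a op \<Rightarrow> 'a op" where
  "adjoint M A = {(g, h). g \<in> L2 M \<and> h \<in> L2 M \<and>
                     (\<forall>(f, k) \<in> A. ip M k g = ip M f h)}"

definition op_kernel :: "'a measure \<Rightarrow> 'a op \<Rightarrow> ('a \<Rightarrow> complex) set" where
  "op_kernel M A = {f. (f, (\<lambda>_. 0)) \<in> A}"

definition positive_selfadjoint :: "'a measure \<Rightarrow> 'a op \<Rightarrow> bool" where
  "positive_selfadjoint M T \<longleftrightarrow> is_operator M T \<and> densely_defined M T \<and>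
     adjoint M T = T \<and> (\<forall>(f, g) \<in> T. 0 \<le> Re (ip M g f))"

text \<open>T is the modulus |A| = (A*A)^(1/2): the positive selfadjoint operator with T T = A* A.\<close>
definition is_modulus :: "'a measure \<Rightarrow> 'a op \<Rightarrow> 'a op \<Rightarrow> bool" where
  "is_modulus M A T \<longleftrightarrow> positive_selfadjoint M T \<and> T O T = A O adjoint M A"

definition partial_isometry :: "'a measure \<Rightarrow> 'a op \<Rightarrow> bool" where
  "partial_isometry M U \<longleftrightarrow> is_operator M U \<and> Domain U = L2 M \<and>
     (\<forall>(f, g) \<in> U. (\<forall>k \<in> op_kernel M U. ip M f k = 0) \<longrightarrow> l2norm M g = l2norm M f)"

text \<open>Quasinormality: A closed densely defined with polar decomposition A = U|A|
  (U partial isometry with kernel N(U) = N(A)), and U|A| \<subseteq> |A|U.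
  The polar decomposition is unique, so quantifying existentially over it is harmless.\<close>
definition quasinormal :: "'a measure \<Rightarrow> 'a op \<Rightarrow> bool" where
  "quasinormal M A \<longleftrightarrow> is_operator M A \<and> closed_op M A \<and> densely_defined M A \<and>
     (\<exists>U T. is_modulus M A T \<and> partial_isometry M U \<and> op_kernel M U = op_kernel M A \<and>
            A = T O U \<and> T O U \<subseteq> U O T)"

definition nonsingular :: "'a measure \<Rightarrow> ('a \<Rightarrow> 'a) \<Rightarrow> bool" where
  "nonsingular M \<phi> \<longleftrightarrow> \<phi> \<in> M \<rightarrow>\<^sub>M M \<and>
     (\<forall>\<Delta> \<in> sets M. emeasure M \<Delta> = 0 \<longrightarrow> emeasure M (\<phi> -` \<Delta> \<inter> space M) = 0)"

definition comp_op :: "'a measure \<Rightarrow> ('a \<Rightarrow> 'a) \<Rightarrow> 'a op" where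
  "comp_op M \<phi> = {(f, g). f \<in> L2 M \<and> g \<in> L2 M \<and> (AE x in M. g x = f (\<phi> x))}"

definition h_phi :: "'a measure \<Rightarrow> ('a \<Rightarrow> 'a) \<Rightarrow> 'a \<Rightarrow> ennreal" where
  "h_phi M \<phi> = RN_deriv M (distr M M \<phi>)"

definition is_cond_exp :: "'a measure \<Rightarrow> ('a \<Rightarrow> 'a) \<Rightarrow> ('a \<Rightarrow> ennreal) \<Rightarrow> ('a \<Rightarrow> ennreal) \<Rightarrow> bool" where
  "is_cond_exp M \<phi> f e \<longleftrightarrow> e \<in> borel_measurable (vimage_algebra (space M) \<phi> M) \<and>
     (\<forall>g \<in> borel_measurable M. (\<integral>\<^sup>+x. g (\<phi> x) * f x \<partial>M) = (\<integral>\<^sup>+x. g (\<phi> x) * e x \<partial>M))"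

text \<open>Division in [0,oo] with the conventions 1/0 = oo, 0/0 = 1 (and 0 * oo = 0).\<close>
definition cdiv :: "ennreal \<Rightarrow> ennreal \<Rightarrow> ennreal" where
  "cdiv a b = (if a = 0 \<and> b = 0 then 1 else a / b)"

abbreviation Bor_Rplus :: "real measure" where
  "Bor_Rplus \<equiv> restrict_space borel {0..}"

definition prob_family :: "'a measure \<Rightarrow> ('a \<Rightarrow> real measure) \<Rightarrow> bool" where
  "prob_family B P \<longleftrightarrow>
     (\<forall>x \<in> space B. prob_space (P x) \<and> sets (P x) = sets Bor_Rplus) \<and>
     (\<forall>\<sigma> \<in> sets Bor_Rplus. (\<lambda>x. emeasure (P x) \<sigma>) \<in> borel_measurable B)"

definition CC :: "'a measure \<Rightarrow> ('a \<Rightarrow> 'a) \<Rightarrow> ('a \<Rightarrow> real measure) \<Rightarrow> bool" where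
  "CC M \<phi> P \<longleftrightarrow> (\<forall>\<sigma> \<in> sets Bor_Rplus. \<exists>e. is_cond_exp M \<phi> (\<lambda>x. emeasure (P x) \<sigma>) e \<and>
     (AE x in M. e x = cdiv (\<integral>\<^sup>+t\<in>\<sigma>. ennreal t \<partial>(P (\<phi> x))) (h_phi M \<phi> (\<phi> x))))"

end

theory Submission
  imports Defs
begin

lemma cnj_meas[measurable]:
  assumes [measurable]: "f \<in> borel_measurable M"
  shows "(\<lambda>x. cnj (f x)) \<in> borel_measurable M"
proof -
  have "cnj \<in> borel_measurable borel"
    by (rule borel_measurable_continuous_onI) (intro continuous_on_cnj continuous_on_id)
  then show ?thesis using measurable_compose[OF assms] by blast
qed

lemma L2_meas: "f \<in> L2 M \<Longrightarrow> f \<in> borel_measurable M"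
  unfolding L2_def by auto

lemma L2_int: "f \<in> L2 M \<Longrightarrow> integrable M (\<lambda>x. (cmod (f x))\<^sup>2)"
  unfolding L2_def by auto

lemma ab_le2: fixes a b :: real shows "2 * a * b \<le> a\<^sup>2 + b\<^sup>2"
proof -
  have "0 \<le> (a - b)\<^sup>2" by simp
  then show ?thesis by (simp add: power2_eq_square algebra_simps)
qed

lemma ab_le: fixes a b :: real assumes "0 \<le> a" "0 \<le> b" shows "a * b \<le> a\<^sup>2 + b\<^sup>2"
proof -
  have "0 \<le> a * b" using assms by simp
  then show ?thesis using ab_le2[of a b] by simp
qed

lemma L2_prod:
  assumes "f \<in> L2 M" "g \<in> L2 M"
  shows "integrable M (\<lambda>x. f x * cnj (g x))"
proof (rule Bochner_Integration.integrable_bound[of M "\<lambda>x. (cmod (f x))\<^sup>2 + (cmod (g x))\<^sup>2"])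
  show "integrable M (\<lambda>x. (cmod (f x))\<^sup>2 + (cmod (g x))\<^sup>2)"
    using assms by (intro Bochner_Integration.integrable_add L2_int)
  show "(\<lambda>x. f x * cnj (g x)) \<in> borel_measurable M"
    using L2_meas[OF assms(1)] L2_meas[OF assms(2)] by measurable
  show "AE x in M. norm (f x * cnj (g x)) \<le> norm ((cmod (f x))\<^sup>2 + (cmod (g x))\<^sup>2)"
    by (intro AE_I2) (simp add: norm_mult ab_le)
qed

lemma L2_diff:
  assumes "f \<in> L2 M" "g \<in> L2 M"
  shows "integrable M (\<lambda>x. (cmod (f x - g x))\<^sup>2)"
proof (rule Bochner_Integration.integrable_bound[of M "\<lambda>x. 2 * (cmod (f x))\<^sup>2 + 2 * (cmod (g x))\<^sup>2"])
  show "integrable M (\<lambda>x. 2 * (cmod (f x))\<^sup>2 + 2 * (cmod (g x))\<^sup>2)"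
    using assms by (intro Bochner_Integration.integrable_add integrable_mult_right L2_int)
  show "(\<lambda>x. (cmod (f x - g x))\<^sup>2) \<in> borel_measurable M"
    using L2_meas[OF assms(1)] L2_meas[OF assms(2)] by measurable
  show "AE x in M. norm ((cmod (f x - g x))\<^sup>2) \<le> norm (2 * (cmod (f x))\<^sup>2 + 2 * (cmod (g x))\<^sup>2)"
  proof (intro AE_I2)
    fix x
    have t: "cmod (f x - g x) \<le> cmod (f x) + cmod (g x)" by (rule norm_triangle_ineq4)
    have "(cmod (f x - g x))\<^sup>2 \<le> (cmod (f x) + cmod (g x))\<^sup>2"
      using t by (intro power_mono) auto
    also have "\<dots> \<le> 2 * (cmod (f x))\<^sup>2 + 2 * (cmod (g x))\<^sup>2"
      using ab_le2[of "cmod (f x)" "cmod (g x)"] by (simp add: power2_sum)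
    finally show "norm ((cmod (f x - g x))\<^sup>2) \<le> norm (2 * (cmod (f x))\<^sup>2 + 2 * (cmod (g x))\<^sup>2)"
      by simp
  qed
qed

lemma L2_bdd:
  assumes [measurable]: "f \<in> borel_measurable M" and S: "S \<in> sets M" "emeasure M S < \<infinity>"
    and b: "\<And>x. x \<in> space M \<Longrightarrow> cmod (f x) \<le> c"
    and z: "\<And>x. x \<in> space M \<Longrightarrow> x \<notin> S \<Longrightarrow> f x = 0"
  shows "f \<in> L2 M"
  unfolding L2_def
proof (safe)
  show "integrable M (\<lambda>x. (cmod (f x))\<^sup>2)"
  proof (rule integrableI_bounded_set[OF S(1) _ S(2), where B="c\<^sup>2"])
    show "(\<lambda>x. (cmod (f x))\<^sup>2) \<in> borel_measurable M" by measurable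
    show "AE x\<in>S in M. norm ((cmod (f x))\<^sup>2) \<le> c\<^sup>2"
      using b by (intro AE_I2) (auto intro!: power_mono)
    show "AE x in M. x \<notin> S \<longrightarrow> (cmod (f x))\<^sup>2 = 0"
      using z by (intro AE_I2) auto
  qed
qed simp

lemma L2_nn:
  assumes [measurable]: "f \<in> borel_measurable M"
    and "(\<integral>\<^sup>+x. ennreal ((cmod (f x))\<^sup>2) \<partial>M) < \<infinity>"
  shows "f \<in> L2 M"
  unfolding L2_def using assms by (auto intro!: integrableI_bounded)

lemma L2_nn_fin:
  assumes "f \<in> L2 M"
  shows "(\<integral>\<^sup>+x. ennreal ((cmod (f x))\<^sup>2) \<partial>M) < \<infinity>"
  using nn_integral_eq_integral[OF L2_int[OF assms]] by simp

locale cs =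
  fixes M :: "'a measure" and \<phi> :: "'a \<Rightarrow> 'a"
  assumes sf: "sigma_finite_measure M"
    and ns: "nonsingular M \<phi>"
begin

definition h where "h = h_phi M \<phi>"
definition hr where "hr x = enn2real (h x)"

lemma phi_meas[measurable]: "\<phi> \<in> M \<rightarrow>\<^sub>M M"
  using ns unfolding nonsingular_def by auto

lemma phi_space: "x \<in> space M \<Longrightarrow> \<phi> x \<in> space M"
  using measurable_space[OF phi_meas] by auto

lemma AE_comp:
  assumes "AE x in M. P x" shows "AE x in M. P (\<phi> x)"
proof -
  obtain N where N: "{x\<in>space M. \<not> P x} \<subseteq> N" "N \<in> null_sets M"
    using assms by (auto elim!: AE_E)
  have "\<phi> -` N \<inter> space M \<in> null_sets M"
    using ns N unfolding nonsingular_def by (auto simp: null_sets_def)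
  moreover have "{x\<in>space M. \<not> P (\<phi> x)} \<subseteq> \<phi> -` N \<inter> space M"
    using N phi_space by auto
  ultimately show ?thesis by (intro AE_I'[where N="\<phi> -` N \<inter> space M"]) auto
qed

lemma ac: "absolutely_continuous M (distr M M \<phi>)"
  unfolding absolutely_continuous_def
proof
  fix A assume "A \<in> null_sets M"
  then show "A \<in> null_sets (distr M M \<phi>)"
    using ns unfolding nonsingular_def by (auto simp: null_sets_def emeasure_distr)
qed

lemma h_meas[measurable]: "h \<in> borel_measurable M"
  unfolding h_def h_phi_def by simp

lemma hr_meas[measurable]: "hr \<in> borel_measurable M"
  unfolding hr_def[abs_def] by simp

lemma dens: "density M h = distr M M \<phi>"
  unfolding h_def h_phi_def
  by (rule sigma_finite_measure.density_RN_deriv[OF sf ac]) simp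

lemma CV:
  assumes [measurable]: "f \<in> borel_measurable M"
  shows "(\<integral>\<^sup>+x. f (\<phi> x) \<partial>M) = (\<integral>\<^sup>+x. h x * f x \<partial>M)"
proof -
  have "(\<integral>\<^sup>+x. f (\<phi> x) \<partial>M) = (\<integral>\<^sup>+x. f x \<partial>distr M M \<phi>)"
    by (simp add: nn_integral_distr)
  also have "\<dots> = (\<integral>\<^sup>+x. f x \<partial>density M h)" by (simp add: dens)
  also have "\<dots> = (\<integral>\<^sup>+x. h x * f x \<partial>M)" by (simp add: nn_integral_density)
  finally show ?thesis .
qed

lemma emeasure_pre: 
  assumes [measurable]: "S \<in> sets M"
  shows "emeasure M (\<phi> -` S \<inter> space M) = (\<integral>\<^sup>+x. h x * indicator S x \<partial>M)"
proof -
  have m: "\<phi> -` S \<inter> space M \<in> sets M" using measurable_sets[OF phi_meas assms] .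
  have "emeasure M (\<phi> -` S \<inter> space M) = (\<integral>\<^sup>+x. indicator (\<phi> -` S \<inter> space M) x \<partial>M)"
    using m by simp
  also have "\<dots> = (\<integral>\<^sup>+x. indicator S (\<phi> x) \<partial>M)"
    by (rule nn_integral_cong) (auto simp: indicator_def)
  also have "\<dots> = (\<integral>\<^sup>+x. h x * indicator S x \<partial>M)" by (rule CV) simp
  finally show ?thesis .
qed

lemma AE_h_comp_pos: "AE x in M. h (\<phi> x) \<noteq> 0"
proof -
  have S: "{x\<in>space M. h x = 0} \<in> sets M" by measurable
  have "emeasure M (\<phi> -` {x\<in>space M. h x = 0} \<inter> space M) = 0"
    unfolding emeasure_pre[OF S]
    by (rule nn_integral_0_iff_AE[THEN iffD2]) (auto simp: indicator_def)
  moreover have "\<phi> -` {x\<in>space M. h x = 0} \<inter> space M = {x\<in>space M. h (\<phi> x) = 0}"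
    using phi_space by auto
  ultimately show ?thesis
    by (subst AE_iff_measurable[OF _ refl]) auto
qed

lemma L2_comp:
  assumes [measurable]: "f \<in> borel_measurable M"
    and "(\<integral>\<^sup>+x. h x * ennreal ((cmod (f x))\<^sup>2) \<partial>M) < \<infinity>"
  shows "(\<lambda>x. f (\<phi> x)) \<in> L2 M"
  using assms CV[of "\<lambda>x. ennreal ((cmod (f x))\<^sup>2)"] by (intro L2_nn) simp_all

lemma hfin:
  assumes dd: "densely_defined M (comp_op M \<phi>)"
  shows "AE x in M. h x \<noteq> \<infinity>"
proof (rule ccontr)
  assume nAE: "\<not> (AE x in M. h x \<noteq> \<infinity>)"
  obtain F :: "nat \<Rightarrow> 'a set" where F: "range F \<subseteq> sets M" "\<Union> (range F) = space M"
    "\<And>i. emeasure M (F i) \<noteq> \<infinity>" "incseq F"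
    using sigma_finite_measure.sigma_finite_incseq[OF sf] by metis
  define I where "I = {x\<in>space M. h x = \<infinity>}"
  have I[measurable]: "I \<in> sets M" unfolding I_def by measurable
  have I0: "emeasure M I \<noteq> 0"
    using nAE unfolding I_def by (subst (asm) AE_iff_measurable[OF _ refl]) auto
  have lim: "(\<lambda>i. emeasure M (F i \<inter> I)) \<longlonglongrightarrow> emeasure M (\<Union>i. F i \<inter> I)"
  proof (intro Lim_emeasure_incseq)
    show "incseq (\<lambda>i. F i \<inter> I)" using F(4) unfolding incseq_def by blast
  qed (use F in auto)
  have UI: "(\<Union>i. F i \<inter> I) = I" using F(2) I_def by auto
  have "\<exists>m. emeasure M (F m \<inter> I) \<noteq> 0"
  proof (rule ccontr)
    assume "\<not> ?thesis"
    then have "(\<lambda>i. emeasure M (F i \<inter> I)) = (\<lambda>i. 0)" by auto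
    with lim UI have "(\<lambda>i. 0::ennreal) \<longlonglongrightarrow> emeasure M I" by simp
    then have "emeasure M I = 0" using LIMSEQ_unique tendsto_const by blast
    with I0 show False by simp
  qed
  then obtain m where "emeasure M (F m \<inter> I) \<noteq> 0" by blast
  define B where "B = F m \<inter> I"
  have B[measurable]: "B \<in> sets M" using F unfolding B_def by auto
  have le: "emeasure M B \<le> emeasure M (F m)" unfolding B_def using F by (intro emeasure_mono) auto
  have "emeasure M (F m) < \<infinity>" using F(3)[of m] by (simp add: top.not_eq_extremum)
  then have Bfin: "emeasure M B < \<infinity>" by (rule le_less_trans[OF le])
  have Bpos: "0 < measure M B"
    using \<open>emeasure M (F m \<inter> I) \<noteq> 0\<close> Bfin unfolding B_def
    by (auto simp: measure_def enn2real_positive_iff zero_less_iff_neq_zero)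
  define Fn where "Fn = (\<lambda>x. complex_of_real (indicator B x))"
  have FnL2: "Fn \<in> L2 M"
    by (rule L2_bdd[OF _ B Bfin, where c=1]) (auto simp: Fn_def indicator_def)
  have sq: "0 < sqrt (measure M B)" using Bpos by simp
  have "\<exists>g\<in>Domain (comp_op M \<phi>). l2norm M (\<lambda>x. Fn x - g x) < sqrt (measure M B)"
    using dd FnL2 sq unfolding densely_defined_def by blast
  then obtain g where g: "g \<in> Domain (comp_op M \<phi>)" and gl: "l2norm M (\<lambda>x. Fn x - g x) < sqrt (measure M B)"
    by blast
  obtain k where gk: "g \<in> L2 M" "k \<in> L2 M" "AE x in M. k x = g (\<phi> x)"
    using g unfolding comp_op_def by auto
  have [measurable]: "g \<in> borel_measurable M" using gk L2_meas by auto
  have "(\<integral>\<^sup>+x. h x * ennreal ((cmod (g x))\<^sup>2) \<partial>M) = (\<integral>\<^sup>+x. ennreal ((cmod (g (\<phi> x)))\<^sup>2) \<partial>M)"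
    using CV[of "\<lambda>x. ennreal ((cmod (g x))\<^sup>2)"] by simp
  also have "\<dots> = (\<integral>\<^sup>+x. ennreal ((cmod (k x))\<^sup>2) \<partial>M)"
    using gk(3) by (intro nn_integral_cong_AE) auto
  also have "\<dots> < \<infinity>" using L2_nn_fin[OF gk(2)] .
  finally have fin: "(\<integral>\<^sup>+x. h x * ennreal ((cmod (g x))\<^sup>2) \<partial>M) < \<infinity>" .
  have "(\<integral>\<^sup>+x. \<infinity> * (indicator B x * ennreal ((cmod (g x))\<^sup>2)) \<partial>M) \<le> (\<integral>\<^sup>+x. h x * ennreal ((cmod (g x))\<^sup>2) \<partial>M)"
    by (intro nn_integral_mono) (auto simp: indicator_def B_def I_def)
  with fin have "\<infinity> * (\<integral>\<^sup>+x. indicator B x * ennreal ((cmod (g x))\<^sup>2) \<partial>M) < \<infinity>"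
    by (subst nn_integral_cmult[symmetric]) auto
  then have "(\<integral>\<^sup>+x. indicator B x * ennreal ((cmod (g x))\<^sup>2) \<partial>M) = 0"
    by (metis ennreal_mult_eq_top_iff infinity_ennreal_def less_irrefl)
  then have "AE x in M. indicator B x * ennreal ((cmod (g x))\<^sup>2) = 0"
    by (subst (asm) nn_integral_0_iff_AE) auto
  then have gB: "AE x in M. x \<in> B \<longrightarrow> g x = 0"
    by (auto elim!: AE_mp intro!: AE_I2 simp: indicator_def)
  have "measure M B = (LINT x|M. indicator B x)" by simp
  also have "\<dots> \<le> (LINT x|M. (cmod (Fn x - g x))\<^sup>2)"
  proof (rule integral_mono_AE)
    show "integrable M (indicat_real B)" using Bfin by (intro integrable_real_indicator) auto
    show "integrable M (\<lambda>x. (cmod (Fn x - g x))\<^sup>2)" using FnL2 gk(1) by (rule L2_diff)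
    show "AE x in M. indicat_real B x \<le> (cmod (Fn x - g x))\<^sup>2"
      using gB by eventually_elim (auto simp: indicator_def Fn_def)
  qed
  finally have "sqrt (measure M B) \<le> l2norm M (\<lambda>x. Fn x - g x)"
    unfolding l2norm_def by simp
  with gl show False by simp
qed

lemma bnd_mult:
  assumes "(a::ennreal) \<le> ennreal c" "0 \<le> r" "r \<le> d" "0 \<le> c"
  shows "a * ennreal (r\<^sup>2) \<le> ennreal (c * d\<^sup>2)"
proof -
  have "a * ennreal (r\<^sup>2) \<le> ennreal c * ennreal (d\<^sup>2)"
    using assms by (intro mult_mono ennreal_leI power_mono) auto
  also have "\<dots> = ennreal (c * d\<^sup>2)" using assms by (simp add: ennreal_mult)
  finally show ?thesis .
qed

lemma L2_comp_bdd:
  assumes [measurable]: "f \<in> borel_measurable M" and S[measurable]: "S \<in> sets M" and Sf: "emeasure M S < \<infinity>"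
    and hb: "\<And>x. x \<in> space M \<Longrightarrow> x \<in> S \<Longrightarrow> h x \<le> ennreal c"
    and fb: "\<And>x. x \<in> space M \<Longrightarrow> cmod (f x) \<le> d"
    and z: "\<And>x. x \<in> space M \<Longrightarrow> x \<notin> S \<Longrightarrow> f x = 0" and c: "0 \<le> c"
  shows "f \<in> L2 M" "(\<lambda>x. f (\<phi> x)) \<in> L2 M"
proof -
  show "f \<in> L2 M" using fb z by (intro L2_bdd[OF _ S Sf]) auto
  have "(\<integral>\<^sup>+x. h x * ennreal ((cmod (f x))\<^sup>2) \<partial>M) \<le> (\<integral>\<^sup>+x. ennreal (c * d\<^sup>2) * indicator S x \<partial>M)"
    using hb fb z c by (intro nn_integral_mono) (auto simp: indicator_def intro!: bnd_mult)
  also have "\<dots> = ennreal (c * d\<^sup>2) * emeasure M S" using S by (simp add: nn_integral_cmult_indicator)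
  also have "\<dots> < \<infinity>" using Sf by (simp add: ennreal_mult_less_top top.not_eq_extremum)
  finally show "(\<lambda>x. f (\<phi> x)) \<in> L2 M" by (intro L2_comp) auto
qed

lemma pairA: "f \<in> L2 M \<Longrightarrow> (\<lambda>x. f (\<phi> x)) \<in> L2 M \<Longrightarrow> (f, \<lambda>x. f (\<phi> x)) \<in> comp_op M \<phi>"
  unfolding comp_op_def by auto

lemma dens_r:
  assumes hf: "AE x in M. h x \<noteq> \<infinity>"
  shows "distr M M \<phi> = density M (\<lambda>x. ennreal (hr x))"
  unfolding dens[symmetric] hr_def
  by (rule density_cong) (use hf in \<open>auto elim!: AE_mp intro!: AE_I2 simp: ennreal_enn2real_if\<close>)

lemma CV_int:
  assumes hf: "AE x in M. h x \<noteq> \<infinity>" and [measurable]: "F \<in> borel_measurable M"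
    and int: "integrable M (\<lambda>x. F (\<phi> x))"
  shows "integrable M (\<lambda>x. complex_of_real (hr x) * F x)"
    "(LINT x|M. F (\<phi> x)) = (LINT x|M. complex_of_real (hr x) * F x)"
proof -
  have hr0: "AE x in M. 0 \<le> hr x" by (simp add: hr_def)
  have "integrable (distr M M \<phi>) F" using int by (simp add: integrable_distr_eq)
  then have "integrable (density M (\<lambda>x. ennreal (hr x))) F" by (simp add: dens_r[OF hf])
  then have "integrable M (\<lambda>x. hr x *\<^sub>R F x)" using hr0 by (simp add: integrable_density)
  then show "integrable M (\<lambda>x. complex_of_real (hr x) * F x)" by (simp add: scaleR_conv_of_real)
  have "(LINT x|M. F (\<phi> x)) = integral\<^sup>L (distr M M \<phi>) F" by (simp add: integral_distr)
  also have "\<dots> = integral\<^sup>L (density M (\<lambda>x. ennreal (hr x))) F" by (simp add: dens_r[OF hf])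
  also have "\<dots> = (LINT x|M. hr x *\<^sub>R F x)" using hr0 by (simp add: integral_density)
  finally show "(LINT x|M. F (\<phi> x)) = (LINT x|M. complex_of_real (hr x) * F x)"
    by (simp add: scaleR_conv_of_real)
qed

lemma key:
  assumes incl: "(comp_op M \<phi> O adjoint M (comp_op M \<phi>)) O comp_op M \<phi> \<subseteq> comp_op M \<phi> O (comp_op M \<phi> O adjoint M (comp_op M \<phi>))"
    and hf: "AE x in M. h x \<noteq> \<infinity>"
    and E[measurable]: "E \<in> sets M" and Efin: "emeasure M E < \<infinity>"
    and Eb: "\<And>x. x \<in> E \<Longrightarrow> h x \<le> ennreal c" and c: "0 \<le> c"
  shows "AE x in M. h x \<noteq> \<infinity> \<longrightarrow> \<phi> x \<in> E \<longrightarrow> hr x = hr (\<phi> x)"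
proof -
  let ?A = "comp_op M \<phi>"
  obtain F :: "nat \<Rightarrow> 'a set" where F: "range F \<subseteq> sets M" "\<Union> (range F) = space M"
    "\<And>i. emeasure M (F i) \<noteq> \<infinity>" "incseq F"
    using sigma_finite_measure.sigma_finite_incseq[OF sf] by metis
  have Fm[measurable]: "F i \<in> sets M" for i using F by auto
  have Esp: "E \<subseteq> space M" using sets.sets_into_space[OF E] .
  have hrE: "hr x \<le> c" "h x = ennreal (hr x)" if "x \<in> E" for x
  proof -
    have "h x \<noteq> \<infinity>" using Eb[OF that] by (auto simp: top_unique)
    then show "h x = ennreal (hr x)" by (simp add: hr_def ennreal_enn2real_if)
    then show "hr x \<le> c" using Eb[OF that] c by (simp add: ennreal_le_iff)
  qed
  have hr0: "0 \<le> hr x" for x by (simp add: hr_def)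
  define f where "f = (\<lambda>x. complex_of_real (indicator E x))"
  define k where "k = (\<lambda>x. complex_of_real (hr x * indicator E x))"
  have fm[measurable]: "f \<in> borel_measurable M" unfolding f_def by measurable
  have km[measurable]: "k \<in> borel_measurable M" unfolding k_def by measurable
  have fL: "f \<in> L2 M" "(\<lambda>x. f (\<phi> x)) \<in> L2 M"
    by (rule L2_comp_bdd[OF fm E Efin, where c=c and d=1]; use Eb c in \<open>auto simp: f_def indicator_def\<close>)+
  have kL: "k \<in> L2 M" "(\<lambda>x. k (\<phi> x)) \<in> L2 M"
    by (rule L2_comp_bdd[OF km E Efin, where c=c and d=c]; use Eb c hrE hr0 in \<open>auto simp: k_def indicator_def\<close>)+
  have p1: "(f, \<lambda>x. f (\<phi> x)) \<in> ?A" using fL by (rule pairA)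
  have p3: "(k, \<lambda>x. k (\<phi> x)) \<in> ?A" using kL by (rule pairA)
  have p2: "(\<lambda>x. f (\<phi> x), k) \<in> adjoint M ?A"
    unfolding adjoint_def
  proof (safe intro!: fL kL)
    fix u w assume uw: "(u, w) \<in> ?A"
    then have uL: "u \<in> L2 M" and wL: "w \<in> L2 M" and wae: "AE x in M. w x = u (\<phi> x)"
      unfolding comp_op_def by auto
    have [measurable]: "u \<in> borel_measurable M" "w \<in> borel_measurable M" using uL wL by (auto intro: L2_meas)
    have i1: "integrable M (\<lambda>x. w x * cnj (f (\<phi> x)))" using wL fL by (intro L2_prod)
    have ae1: "AE x in M. w x * cnj (f (\<phi> x)) = u (\<phi> x) * f (\<phi> x)"
      using wae by eventually_elim (simp add: f_def)
    have i2: "integrable M (\<lambda>x. (\<lambda>y. u y * f y) (\<phi> x))"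
      by (rule integrable_cong_AE_imp[OF i1 _ ae1]; measurable)
    have "ip M w (\<lambda>x. f (\<phi> x)) = (LINT x|M. (\<lambda>y. u y * f y) (\<phi> x))"
      unfolding ip_def by (rule integral_cong_AE[OF _ _ ae1]; measurable)
    also have "\<dots> = (LINT y|M. complex_of_real (hr y) * (u y * f y))"
      by (rule CV_int(2)[OF hf _ i2]) measurable
    also have "\<dots> = ip M u k"
      unfolding ip_def by (rule Bochner_Integration.integral_cong) (auto simp: f_def k_def)
    finally show "ip M w (\<lambda>x. f (\<phi> x)) = ip M u k" .
  qed
  have "(f, \<lambda>x. k (\<phi> x)) \<in> (?A O adjoint M ?A) O ?A"
    using p1 p2 p3 by blast
  with incl have "(f, \<lambda>x. k (\<phi> x)) \<in> ?A O (?A O adjoint M ?A)" by blast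
  then obtain g1 g2 where g1: "(f, g1) \<in> ?A" and g2: "(g1, g2) \<in> ?A" and g2a: "(g2, \<lambda>x. k (\<phi> x)) \<in> adjoint M ?A"
    by blast
  have g2L: "g2 \<in> L2 M" using g2 unfolding comp_op_def by auto
  have [measurable]: "g2 \<in> borel_measurable M" using g2L by (rule L2_meas)
  have g2ae: "AE x in M. g2 x = f (\<phi> (\<phi> x))"
  proof -
    have "AE x in M. g2 x = g1 (\<phi> x)" using g2 unfolding comp_op_def by auto
    moreover have "AE x in M. g1 (\<phi> x) = f (\<phi> (\<phi> x))"
      using g1 unfolding comp_op_def by (auto intro!: AE_comp)
    ultimately show ?thesis by eventually_elim auto
  qed
  define D where "D x = indicator E (\<phi> x) * (hr x - hr (\<phi> x))" for x
  have Dm[measurable]: "D \<in> borel_measurable M" unfolding D_def[abs_def] by measurable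
  define G where "G m = {x\<in>space M. \<bar>D x\<bar> \<le> real m \<and> h x \<le> of_nat m} \<inter> F m" for m
  have Gm[measurable]: "G m \<in> sets M" for m unfolding G_def by measurable
  have Gfin: "emeasure M (G m) < \<infinity>" for m
  proof -
    have le: "emeasure M (G m) \<le> emeasure M (F m)" unfolding G_def by (intro emeasure_mono) auto
    have "emeasure M (F m) < \<infinity>" using F(3)[of m] by (simp add: top.not_eq_extremum)
    then show ?thesis by (rule le_less_trans[OF le])
  qed
  have GD: "AE x in M. x \<in> G m \<longrightarrow> D x = 0" for m
  proof -
    define u where "u = (\<lambda>x. complex_of_real (D x * indicator (G m) x))"
    have um[measurable]: "u \<in> borel_measurable M" unfolding u_def by measurable
    have uL: "u \<in> L2 M" "(\<lambda>x. u (\<phi> x)) \<in> L2 M"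
      by (rule L2_comp_bdd[OF um Gm Gfin, where c="real m" and d="real m"];
          auto simp: u_def indicator_def G_def ennreal_of_nat_eq_real_of_nat)+
    have "ip M (\<lambda>x. u (\<phi> x)) g2 = ip M u (\<lambda>x. k (\<phi> x))"
      using g2a pairA[OF uL] unfolding adjoint_def by auto
    have i1: "integrable M (\<lambda>x. u (\<phi> x) * cnj (g2 x))" using uL g2L by (intro L2_prod)
    have ae2: "AE x in M. u (\<phi> x) * cnj (g2 x) = u (\<phi> x) * f (\<phi> (\<phi> x))"
      using g2ae by eventually_elim (simp add: f_def)
    have i2: "integrable M (\<lambda>x. (\<lambda>y. u y * f (\<phi> y)) (\<phi> x))"
      by (rule integrable_cong_AE_imp[OF i1 _ ae2]; measurable)
    have i3: "integrable M (\<lambda>y. complex_of_real (hr y) * (u y * f (\<phi> y)))"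
      by (rule CV_int(1)[OF hf _ i2]) measurable
    have i4: "integrable M (\<lambda>y. u y * cnj (k (\<phi> y)))" using uL kL by (intro L2_prod)
    have "ip M (\<lambda>x. u (\<phi> x)) g2 = (LINT x|M. (\<lambda>y. u y * f (\<phi> y)) (\<phi> x))"
      unfolding ip_def by (rule integral_cong_AE[OF _ _ ae2]; measurable)
    also have "\<dots> = (LINT y|M. complex_of_real (hr y) * (u y * f (\<phi> y)))"
      by (rule CV_int(2)[OF hf _ i2]) measurable
    finally have e1: "ip M (\<lambda>x. u (\<phi> x)) g2 = (LINT y|M. complex_of_real (hr y) * (u y * f (\<phi> y)))" .
    have "(LINT y|M. complex_of_real (D y * D y * indicator (G m) y))
        = (LINT y|M. complex_of_real (hr y) * (u y * f (\<phi> y)) - u y * cnj (k (\<phi> y)))"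
      by (rule Bochner_Integration.integral_cong)
         (auto simp: u_def f_def k_def D_def indicator_def algebra_simps)
    also have "\<dots> = (LINT y|M. complex_of_real (hr y) * (u y * f (\<phi> y))) - (LINT y|M. u y * cnj (k (\<phi> y)))"
      using i3 i4 by (rule Bochner_Integration.integral_diff)
    also have "\<dots> = 0"
      using e1 \<open>ip M (\<lambda>x. u (\<phi> x)) g2 = ip M u (\<lambda>x. k (\<phi> x))\<close> by (simp add: ip_def)
    finally have "complex_of_real (LINT y|M. D y * D y * indicator (G m) y) = 0"
      by (simp only: integral_complex_of_real)
    then have z: "(LINT y|M. D y * D y * indicator (G m) y) = 0" by simp
    have ir: "integrable M (\<lambda>y. D y * D y * indicator (G m) y)"
    proof (rule integrableI_bounded_set[OF Gm _ Gfin, where B="real m * real m"])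
      show "AE x\<in>G m in M. norm (D x * D x * indicator (G m) x) \<le> real m * real m"
      proof (intro AE_I2 impI)
        fix x assume "x \<in> G m"
        then have "\<bar>D x\<bar> \<le> real m" by (simp add: G_def)
        then have "\<bar>D x\<bar> * \<bar>D x\<bar> \<le> real m * real m" by (intro mult_mono) auto
        then show "norm (D x * D x * indicator (G m) x) \<le> real m * real m"
          by (simp add: abs_mult indicator_def)
      qed
    qed (auto intro!: AE_I2)
    have "AE y in M. D y * D y * indicator (G m) y = 0"
      using z ir by (subst integral_nonneg_eq_0_iff_AE[symmetric]) auto
    then show ?thesis by eventually_elim (auto simp: indicator_def)
  qed
  then have "AE x in M. \<forall>m. x \<in> G m \<longrightarrow> D x = 0" unfolding AE_all_countable by blast
  with AE_space show ?thesis
  proof (eventually_elim)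
    case (elim x)
    show ?case
    proof (intro impI)
      assume hx: "h x \<noteq> \<infinity>" and px: "\<phi> x \<in> E"
      obtain m0 where m0: "x \<in> F m0" using F(2) elim(1) by auto
      obtain m1 :: nat where m1: "\<bar>D x\<bar> + hr x \<le> real m1" using real_arch_simple by blast
      define m where "m = max m0 m1"
      have "x \<in> F m" using m0 F(4) unfolding m_def by (meson incseq_def max.cobounded1 subsetD)
      moreover have "\<bar>D x\<bar> \<le> real m" using m1 hr0[of x] unfolding m_def by linarith
      moreover have "h x \<le> of_nat m"
      proof -
        have "h x = ennreal (hr x)" using hx by (simp add: hr_def ennreal_enn2real_if)
        also have "\<dots> \<le> ennreal (real m)" using m1 abs_ge_zero[of "D x"] unfolding m_def
          by (intro ennreal_leI) linarith
        finally show ?thesis by (simp add: ennreal_of_nat_eq_real_of_nat)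
      qed
      ultimately have "x \<in> G m" using elim(1) unfolding G_def by auto
      then have "D x = 0" using elim(2) by blast
      then show "hr x = hr (\<phi> x)" using px by (simp add: D_def)
    qed
  qed
qed


end



lemma ennreal_Bor[measurable]: "(\<lambda>t. ennreal t) \<in> borel_measurable Bor_Rplus"
  by (rule measurable_restrict_space1) simp

context cs begin

lemma hcomp:
  assumes qn: "quasinormal M (comp_op M \<phi>)"
  shows "AE x in M. h (\<phi> x) = h x" and "AE x in M. h x \<noteq> \<infinity>"
proof -
  let ?A = "comp_op M \<phi>"
  from qn obtain U T where dd: "densely_defined M ?A" and TT: "T O T = ?A O adjoint M ?A"
    and AU: "?A = T O U" and i0: "T O U \<subseteq> U O T"
    unfolding quasinormal_def is_modulus_def by blast
  have hf: "AE x in M. h x \<noteq> \<infinity>" using hfin[OF dd] .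
  then show "AE x in M. h x \<noteq> \<infinity>" .
  have "(T O T) O (T O U) = T O (T O (T O U))" by (simp add: O_assoc)
  also have "\<dots> \<subseteq> T O (T O (U O T))" by (rule relcomp_mono[OF order_refl relcomp_mono[OF order_refl i0]])
  also have "T O (T O (U O T)) = T O ((T O U) O T)" by (simp add: O_assoc)
  also have "\<dots> \<subseteq> T O ((U O T) O T)" by (rule relcomp_mono[OF order_refl relcomp_mono[OF i0 order_refl]])
  also have "\<dots> = (T O U) O (T O T)" by (simp add: O_assoc)
  finally have r: "(T O T) O (T O U) \<subseteq> (T O U) O (T O T)" .
  have "(T O T) O ?A \<subseteq> ?A O (T O T)" using r by (simp only: AU[symmetric])
  then have incl: "(?A O adjoint M ?A) O ?A \<subseteq> ?A O (?A O adjoint M ?A)" by (simp only: TT)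
  obtain F :: "nat \<Rightarrow> 'a set" where F: "range F \<subseteq> sets M" "\<Union> (range F) = space M"
    "\<And>i. emeasure M (F i) \<noteq> \<infinity>" "incseq F"
    using sigma_finite_measure.sigma_finite_incseq[OF sf] by metis
  have Fm[measurable]: "F i \<in> sets M" for i using F by auto
  define E where "E n = {x\<in>space M. h x \<le> of_nat n} \<inter> F n" for n
  have Em[measurable]: "E n \<in> sets M" for n unfolding E_def by measurable
  have "AE x in M. h x \<noteq> \<infinity> \<longrightarrow> \<phi> x \<in> E n \<longrightarrow> hr x = hr (\<phi> x)" for n
  proof (rule key[OF incl hf Em, where c="real n"])
    have le: "emeasure M (E n) \<le> emeasure M (F n)" unfolding E_def by (intro emeasure_mono) auto
    have "emeasure M (F n) < \<infinity>" using F(3)[of n] by (simp add: top.not_eq_extremum)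
    then show "emeasure M (E n) < \<infinity>" by (rule le_less_trans[OF le])
  qed (auto simp: E_def ennreal_of_nat_eq_real_of_nat)
  then have all: "AE x in M. \<forall>n. h x \<noteq> \<infinity> \<longrightarrow> \<phi> x \<in> E n \<longrightarrow> hr x = hr (\<phi> x)"
    unfolding AE_all_countable by blast
  from AE_space hf AE_comp[OF hf] all show "AE x in M. h (\<phi> x) = h x"
  proof eventually_elim
    case (elim x)
    have px: "\<phi> x \<in> space M" using elim(1) by (rule phi_space)
    obtain n0 where n0: "\<phi> x \<in> F n0" using F(2) px by auto
    obtain n1 :: nat where n1: "hr (\<phi> x) \<le> real n1" using real_arch_simple by blast
    define n where "n = max n0 n1"
    have "\<phi> x \<in> F n" using n0 F(4) unfolding n_def by (meson incseq_def max.cobounded1 subsetD)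
    moreover have "h (\<phi> x) \<le> of_nat n"
    proof -
      have "h (\<phi> x) = ennreal (hr (\<phi> x))" using elim(3) by (simp add: hr_def ennreal_enn2real_if)
      also have "\<dots> \<le> ennreal (real n)" using n1 unfolding n_def by (intro ennreal_leI) linarith
      finally show ?thesis by (simp add: ennreal_of_nat_eq_real_of_nat)
    qed
    ultimately have "\<phi> x \<in> E n" using px unfolding E_def by auto
    then have "hr x = hr (\<phi> x)" using elim(2,4) by blast
    moreover have "h x = ennreal (hr x)" using elim(2) by (simp add: hr_def ennreal_enn2real_if)
    moreover have "h (\<phi> x) = ennreal (hr (\<phi> x))" using elim(3) by (simp add: hr_def ennreal_enn2real_if)
    ultimately show ?case by simp
  qed
qed

lemma kernel_meas:
  assumes Q: "prob_family M Q"
  shows "Q \<in> M \<rightarrow>\<^sub>M subprob_algebra Bor_Rplus"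
proof (rule measurable_subprob_algebra)
  fix a assume a: "a \<in> space M"
  show "subprob_space (Q a)" using Q a unfolding prob_family_def by (blast intro: prob_space_imp_subprob_space)
  show "sets (Q a) = sets Bor_Rplus" using Q a unfolding prob_family_def by blast
next
  fix A assume "A \<in> sets Bor_Rplus"
  then show "(\<lambda>a. emeasure (Q a) A) \<in> borel_measurable M" using Q unfolding prob_family_def by blast
qed

lemma nnQ_meas:
  assumes Q: "prob_family M Q" and u: "u \<in> borel_measurable Bor_Rplus"
  shows "(\<lambda>x. \<integral>\<^sup>+t. u t \<partial>Q x) \<in> borel_measurable M"
  using measurable_compose[OF kernel_meas[OF Q] nn_integral_measurable_subprob_algebra[OF u]] .

lemma Q_sets:
  assumes Q: "prob_family M Q" and x: "x \<in> space M"
  shows "sets (Q x) = sets Bor_Rplus" "space (Q x) = space Bor_Rplus" "prob_space (Q x)"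
proof -
  show s: "sets (Q x) = sets Bor_Rplus" using Q x unfolding prob_family_def by blast
  show "space (Q x) = space Bor_Rplus" by (rule sets_eq_imp_space_eq[OF s])
  show "prob_space (Q x)" using Q x unfolding prob_family_def by blast
qed

lemma CC_int:
  assumes Q: "prob_family M Q" and CCQ: "CC M \<phi> Q"
    and hf: "AE x in M. h x \<noteq> \<infinity>" and hp: "AE x in M. h x \<noteq> 0"
    and sig[measurable]: "\<sigma> \<in> sets Bor_Rplus" and g[measurable]: "g \<in> borel_measurable M"
  shows "(\<integral>\<^sup>+x. g (\<phi> x) * emeasure (Q x) \<sigma> \<partial>M) = (\<integral>\<^sup>+y. g y * (\<integral>\<^sup>+t. ennreal t * indicator \<sigma> t \<partial>Q y) \<partial>M)"
proof -
  obtain e where ce: "is_cond_exp M \<phi> (\<lambda>x. emeasure (Q x) \<sigma>) e"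
    and ae: "AE x in M. e x = cdiv (\<integral>\<^sup>+t\<in>\<sigma>. ennreal t \<partial>(Q (\<phi> x))) (h (\<phi> x))"
    using CCQ sig unfolding CC_def h_def by blast
  define a where "a y = (\<integral>\<^sup>+t. ennreal t * indicator \<sigma> t \<partial>Q y)" for y
  have um: "(\<lambda>t. ennreal t * indicator \<sigma> t) \<in> borel_measurable Bor_Rplus" by measurable
  have am[measurable]: "a \<in> borel_measurable M" unfolding a_def[abs_def] using nnQ_meas[OF Q um] .
  have cm[measurable]: "(\<lambda>y. cdiv (a y) (h y)) \<in> borel_measurable M"
    unfolding cdiv_def by measurable
  have "(\<integral>\<^sup>+x. g (\<phi> x) * emeasure (Q x) \<sigma> \<partial>M) = (\<integral>\<^sup>+x. g (\<phi> x) * e x \<partial>M)"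
    using ce g unfolding is_cond_exp_def by blast
  also have "\<dots> = (\<integral>\<^sup>+x. (\<lambda>y. g y * cdiv (a y) (h y)) (\<phi> x) \<partial>M)"
    using ae by (intro nn_integral_cong_AE, eventually_elim) (simp add: a_def)
  also have "\<dots> = (\<integral>\<^sup>+y. h y * (g y * cdiv (a y) (h y)) \<partial>M)"
    by (rule CV) measurable
  also have "\<dots> = (\<integral>\<^sup>+y. g y * a y \<partial>M)"
  proof (rule nn_integral_cong_AE)
    show "AE y in M. h y * (g y * cdiv (a y) (h y)) = g y * a y"
      using hf hp
    proof eventually_elim
      case (elim y)
      have "h y * (g y * cdiv (a y) (h y)) = g y * (a y * h y / h y)"
        using elim by (simp add: cdiv_def ennreal_times_divide mult.commute mult.left_commute)
      also have "\<dots> = g y * a y" using elim by (simp add: ennreal_mult_divide_eq)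
      finally show ?case .
    qed
  qed
  finally show ?thesis by (simp add: a_def)
qed

lemma QM: "prob_family M Q \<Longrightarrow> x \<in> space M \<Longrightarrow> measurable (Q x) N = measurable Bor_Rplus N"
  by (rule measurable_cong_sets[OF Q_sets(1) refl])

lemma J_cong:
  assumes Q: "prob_family M Q"
    and cong: "\<And>x. x \<in> space Bor_Rplus \<Longrightarrow> f1 x = f2 x"
    and IH: "(\<integral>\<^sup>+x. g (\<phi> x) * (\<integral>\<^sup>+t. f2 t \<partial>Q x) \<partial>M) = (\<integral>\<^sup>+y. g y * (\<integral>\<^sup>+t. ennreal t * f2 t \<partial>Q y) \<partial>M)"
  shows "(\<integral>\<^sup>+x. g (\<phi> x) * (\<integral>\<^sup>+t. f1 t \<partial>Q x) \<partial>M) = (\<integral>\<^sup>+y. g y * (\<integral>\<^sup>+t. ennreal t * f1 t \<partial>Q y) \<partial>M)"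
proof -
  have e1: "(\<integral>\<^sup>+t. f1 t \<partial>Q x) = (\<integral>\<^sup>+t. f2 t \<partial>Q x)" if "x \<in> space M" for x
  proof (rule nn_integral_cong)
    fix t assume "t \<in> space (Q x)"
    then show "f1 t = f2 t" using cong Q_sets(2)[OF Q that] by simp
  qed
  have e2: "(\<integral>\<^sup>+t. ennreal t * f1 t \<partial>Q x) = (\<integral>\<^sup>+t. ennreal t * f2 t \<partial>Q x)" if "x \<in> space M" for x
  proof (rule nn_integral_cong)
    fix t assume "t \<in> space (Q x)"
    then show "ennreal t * f1 t = ennreal t * f2 t" using cong Q_sets(2)[OF Q that] by simp
  qed
  have "(\<integral>\<^sup>+x. g (\<phi> x) * (\<integral>\<^sup>+t. f1 t \<partial>Q x) \<partial>M) = (\<integral>\<^sup>+x. g (\<phi> x) * (\<integral>\<^sup>+t. f2 t \<partial>Q x) \<partial>M)"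
    by (rule nn_integral_cong) (simp add: e1)
  also have "\<dots> = (\<integral>\<^sup>+y. g y * (\<integral>\<^sup>+t. ennreal t * f2 t \<partial>Q y) \<partial>M)" by (rule IH)
  also have "\<dots> = (\<integral>\<^sup>+y. g y * (\<integral>\<^sup>+t. ennreal t * f1 t \<partial>Q y) \<partial>M)"
    by (rule nn_integral_cong) (simp add: e2)
  finally show ?thesis .
qed

lemma J_set:
  assumes Q: "prob_family M Q" and CCQ: "CC M \<phi> Q"
    and hf: "AE x in M. h x \<noteq> \<infinity>" and hp: "AE x in M. h x \<noteq> 0"
    and g[measurable]: "g \<in> borel_measurable M" and A: "A \<in> sets Bor_Rplus"
  shows "(\<integral>\<^sup>+x. g (\<phi> x) * (\<integral>\<^sup>+t. indicator A t \<partial>Q x) \<partial>M) = (\<integral>\<^sup>+y. g y * (\<integral>\<^sup>+t. ennreal t * indicator A t \<partial>Q y) \<partial>M)"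
proof -
  have "(\<integral>\<^sup>+x. g (\<phi> x) * (\<integral>\<^sup>+t. indicator A t \<partial>Q x) \<partial>M) = (\<integral>\<^sup>+x. g (\<phi> x) * emeasure (Q x) A \<partial>M)"
  proof (rule nn_integral_cong)
    fix x assume x: "x \<in> space M"
    have "A \<in> sets (Q x)" using A Q_sets(1)[OF Q x] by simp
    then show "g (\<phi> x) * (\<integral>\<^sup>+t. indicator A t \<partial>Q x) = g (\<phi> x) * emeasure (Q x) A" by simp
  qed
  also have "\<dots> = (\<integral>\<^sup>+y. g y * (\<integral>\<^sup>+t. ennreal t * indicator A t \<partial>Q y) \<partial>M)"
    by (rule CC_int[OF Q CCQ hf hp A g])
  finally show ?thesis .
qed

lemma J_mult:
  assumes Q: "prob_family M Q" and g[measurable]: "g \<in> borel_measurable M"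
    and um[measurable]: "u \<in> borel_measurable Bor_Rplus"
    and IH: "(\<integral>\<^sup>+x. g (\<phi> x) * (\<integral>\<^sup>+t. u t \<partial>Q x) \<partial>M) = (\<integral>\<^sup>+y. g y * (\<integral>\<^sup>+t. ennreal t * u t \<partial>Q y) \<partial>M)"
  shows "(\<integral>\<^sup>+x. g (\<phi> x) * (\<integral>\<^sup>+t. c * u t \<partial>Q x) \<partial>M) = (\<integral>\<^sup>+y. g y * (\<integral>\<^sup>+t. ennreal t * (c * u t) \<partial>Q y) \<partial>M)"
proof -
  have um2: "(\<lambda>t. ennreal t * u t) \<in> borel_measurable Bor_Rplus" by measurable
  have i1: "(\<integral>\<^sup>+t. c * u t \<partial>Q x) = c * (\<integral>\<^sup>+t. u t \<partial>Q x)" if "x \<in> space M" for x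
    by (rule nn_integral_cmult) (simp only: QM[OF Q that] um)
  have i2: "(\<integral>\<^sup>+t. ennreal t * (c * u t) \<partial>Q x) = c * (\<integral>\<^sup>+t. ennreal t * u t \<partial>Q x)" if "x \<in> space M" for x
  proof -
    have "(\<integral>\<^sup>+t. ennreal t * (c * u t) \<partial>Q x) = (\<integral>\<^sup>+t. c * (ennreal t * u t) \<partial>Q x)"
      by (simp add: mult.left_commute)
    also have "\<dots> = c * (\<integral>\<^sup>+t. ennreal t * u t \<partial>Q x)"
      by (rule nn_integral_cmult) (simp only: QM[OF Q that] um2)
    finally show ?thesis .
  qed
  have m1: "(\<lambda>x. \<integral>\<^sup>+t. u t \<partial>Q x) \<in> borel_measurable M" by (rule nnQ_meas[OF Q um])
  have m2: "(\<lambda>x. \<integral>\<^sup>+t. ennreal t * u t \<partial>Q x) \<in> borel_measurable M" by (rule nnQ_meas[OF Q um2])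
  have m1': "(\<lambda>x. g (\<phi> x) * (\<integral>\<^sup>+t. u t \<partial>Q x)) \<in> borel_measurable M"
    using m1 by (intro borel_measurable_times_ennreal) simp_all
  have m2': "(\<lambda>x. g x * (\<integral>\<^sup>+t. ennreal t * u t \<partial>Q x)) \<in> borel_measurable M"
    using m2 by (intro borel_measurable_times_ennreal) simp_all
  have "(\<integral>\<^sup>+x. g (\<phi> x) * (\<integral>\<^sup>+t. c * u t \<partial>Q x) \<partial>M) = (\<integral>\<^sup>+x. c * (g (\<phi> x) * (\<integral>\<^sup>+t. u t \<partial>Q x)) \<partial>M)"
    by (rule nn_integral_cong) (simp add: i1 mult.left_commute)
  also have "\<dots> = c * (\<integral>\<^sup>+x. g (\<phi> x) * (\<integral>\<^sup>+t. u t \<partial>Q x) \<partial>M)"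
    by (rule nn_integral_cmult[OF m1'])
  also have "\<dots> = c * (\<integral>\<^sup>+y. g y * (\<integral>\<^sup>+t. ennreal t * u t \<partial>Q y) \<partial>M)" by (simp only: IH)
  also have "\<dots> = (\<integral>\<^sup>+y. c * (g y * (\<integral>\<^sup>+t. ennreal t * u t \<partial>Q y)) \<partial>M)"
    by (rule nn_integral_cmult[OF m2', symmetric])
  also have "\<dots> = (\<integral>\<^sup>+y. g y * (\<integral>\<^sup>+t. ennreal t * (c * u t) \<partial>Q y) \<partial>M)"
  proof (rule nn_integral_cong)
    fix x assume x: "x \<in> space M"
    show "c * (g x * (\<integral>\<^sup>+t. ennreal t * u t \<partial>Q x)) = g x * (\<integral>\<^sup>+t. ennreal t * (c * u t) \<partial>Q x)"
      unfolding i2[OF x] by (simp add: mult.left_commute)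
  qed
  finally show ?thesis .
qed

lemma J_add:
  assumes Q: "prob_family M Q" and g[measurable]: "g \<in> borel_measurable M"
    and um[measurable]: "u \<in> borel_measurable Bor_Rplus" and vm[measurable]: "v \<in> borel_measurable Bor_Rplus"
    and IHu: "(\<integral>\<^sup>+x. g (\<phi> x) * (\<integral>\<^sup>+t. u t \<partial>Q x) \<partial>M) = (\<integral>\<^sup>+y. g y * (\<integral>\<^sup>+t. ennreal t * u t \<partial>Q y) \<partial>M)"
    and IHv: "(\<integral>\<^sup>+x. g (\<phi> x) * (\<integral>\<^sup>+t. v t \<partial>Q x) \<partial>M) = (\<integral>\<^sup>+y. g y * (\<integral>\<^sup>+t. ennreal t * v t \<partial>Q y) \<partial>M)"
  shows "(\<integral>\<^sup>+x. g (\<phi> x) * (\<integral>\<^sup>+t. v t + u t \<partial>Q x) \<partial>M) = (\<integral>\<^sup>+y. g y * (\<integral>\<^sup>+t. ennreal t * (v t + u t) \<partial>Q y) \<partial>M)"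
proof -
  have um2: "(\<lambda>t. ennreal t * u t) \<in> borel_measurable Bor_Rplus" by measurable
  have vm2: "(\<lambda>t. ennreal t * v t) \<in> borel_measurable Bor_Rplus" by measurable
  have m1: "(\<lambda>x. \<integral>\<^sup>+t. u t \<partial>Q x) \<in> borel_measurable M" by (rule nnQ_meas[OF Q um])
  have m2: "(\<lambda>x. \<integral>\<^sup>+t. ennreal t * u t \<partial>Q x) \<in> borel_measurable M" by (rule nnQ_meas[OF Q um2])
  have m3: "(\<lambda>x. \<integral>\<^sup>+t. v t \<partial>Q x) \<in> borel_measurable M" by (rule nnQ_meas[OF Q vm])
  have m4: "(\<lambda>x. \<integral>\<^sup>+t. ennreal t * v t \<partial>Q x) \<in> borel_measurable M" by (rule nnQ_meas[OF Q vm2])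
  have m1': "(\<lambda>x. g (\<phi> x) * (\<integral>\<^sup>+t. u t \<partial>Q x)) \<in> borel_measurable M"
    using m1 by (intro borel_measurable_times_ennreal) simp_all
  have m2': "(\<lambda>x. g x * (\<integral>\<^sup>+t. ennreal t * u t \<partial>Q x)) \<in> borel_measurable M"
    using m2 by (intro borel_measurable_times_ennreal) simp_all
  have m3': "(\<lambda>x. g (\<phi> x) * (\<integral>\<^sup>+t. v t \<partial>Q x)) \<in> borel_measurable M"
    using m3 by (intro borel_measurable_times_ennreal) simp_all
  have m4': "(\<lambda>x. g x * (\<integral>\<^sup>+t. ennreal t * v t \<partial>Q x)) \<in> borel_measurable M"
    using m4 by (intro borel_measurable_times_ennreal) simp_all
  have i1: "(\<integral>\<^sup>+t. v t + u t \<partial>Q x) = (\<integral>\<^sup>+t. v t \<partial>Q x) + (\<integral>\<^sup>+t. u t \<partial>Q x)" if "x \<in> space M" for x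
    by (rule nn_integral_add) (simp_all only: QM[OF Q that] um vm)
  have i2: "(\<integral>\<^sup>+t. ennreal t * (v t + u t) \<partial>Q x) = (\<integral>\<^sup>+t. ennreal t * v t \<partial>Q x) + (\<integral>\<^sup>+t. ennreal t * u t \<partial>Q x)" if "x \<in> space M" for x
  proof -
    have "(\<integral>\<^sup>+t. ennreal t * (v t + u t) \<partial>Q x) = (\<integral>\<^sup>+t. ennreal t * v t + ennreal t * u t \<partial>Q x)"
      by (simp add: distrib_left)
    also have "\<dots> = (\<integral>\<^sup>+t. ennreal t * v t \<partial>Q x) + (\<integral>\<^sup>+t. ennreal t * u t \<partial>Q x)"
      by (rule nn_integral_add) (simp_all only: QM[OF Q that] um2 vm2)
    finally show ?thesis .
  qed
  have "(\<integral>\<^sup>+x. g (\<phi> x) * (\<integral>\<^sup>+t. v t + u t \<partial>Q x) \<partial>M)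
      = (\<integral>\<^sup>+x. g (\<phi> x) * (\<integral>\<^sup>+t. v t \<partial>Q x) + g (\<phi> x) * (\<integral>\<^sup>+t. u t \<partial>Q x) \<partial>M)"
    by (rule nn_integral_cong) (simp add: i1 distrib_left)
  also have "\<dots> = (\<integral>\<^sup>+x. g (\<phi> x) * (\<integral>\<^sup>+t. v t \<partial>Q x) \<partial>M) + (\<integral>\<^sup>+x. g (\<phi> x) * (\<integral>\<^sup>+t. u t \<partial>Q x) \<partial>M)"
    by (rule nn_integral_add[OF m3' m1'])
  also have "\<dots> = (\<integral>\<^sup>+y. g y * (\<integral>\<^sup>+t. ennreal t * v t \<partial>Q y) \<partial>M) + (\<integral>\<^sup>+y. g y * (\<integral>\<^sup>+t. ennreal t * u t \<partial>Q y) \<partial>M)"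
    by (simp only: IHu IHv)
  also have "\<dots> = (\<integral>\<^sup>+y. g y * (\<integral>\<^sup>+t. ennreal t * v t \<partial>Q y) + g y * (\<integral>\<^sup>+t. ennreal t * u t \<partial>Q y) \<partial>M)"
    by (rule nn_integral_add[OF m4' m2', symmetric])
  also have "\<dots> = (\<integral>\<^sup>+y. g y * (\<integral>\<^sup>+t. ennreal t * (v t + u t) \<partial>Q y) \<partial>M)"
  proof (rule nn_integral_cong)
    fix x assume x: "x \<in> space M"
    show "g x * (\<integral>\<^sup>+t. ennreal t * v t \<partial>Q x) + g x * (\<integral>\<^sup>+t. ennreal t * u t \<partial>Q x) = g x * (\<integral>\<^sup>+t. ennreal t * (v t + u t) \<partial>Q x)"
      unfolding i2[OF x] by (simp add: distrib_left)
  qed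
  finally show ?thesis .
qed

lemma J_seq:
  assumes Q: "prob_family M Q" and g[measurable]: "g \<in> borel_measurable M"
    and Um[measurable]: "\<And>i. U i \<in> borel_measurable Bor_Rplus" and inc: "incseq U"
    and IH: "\<And>i. (\<integral>\<^sup>+x. g (\<phi> x) * (\<integral>\<^sup>+t. U i t \<partial>Q x) \<partial>M) = (\<integral>\<^sup>+y. g y * (\<integral>\<^sup>+t. ennreal t * U i t \<partial>Q y) \<partial>M)"
  shows "(\<integral>\<^sup>+x. g (\<phi> x) * (\<integral>\<^sup>+t. (\<Squnion> range U) t \<partial>Q x) \<partial>M) = (\<integral>\<^sup>+y. g y * (\<integral>\<^sup>+t. ennreal t * (\<Squnion> range U) t \<partial>Q y) \<partial>M)"
proof -
  have Um2: "(\<lambda>t. ennreal t * U i t) \<in> borel_measurable Bor_Rplus" for i by measurable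
  have mi1: "(\<lambda>x. \<integral>\<^sup>+t. U i t \<partial>Q x) \<in> borel_measurable M" for i by (rule nnQ_meas[OF Q Um])
  have mi2: "(\<lambda>x. \<integral>\<^sup>+t. ennreal t * U i t \<partial>Q x) \<in> borel_measurable M" for i by (rule nnQ_meas[OF Q Um2])
  have mi1': "(\<lambda>x. g (\<phi> x) * (\<integral>\<^sup>+t. U i t \<partial>Q x)) \<in> borel_measurable M" for i
    using mi1 by (intro borel_measurable_times_ennreal) simp_all
  have mi2': "(\<lambda>x. g x * (\<integral>\<^sup>+t. ennreal t * U i t \<partial>Q x)) \<in> borel_measurable M" for i
    using mi2 by (intro borel_measurable_times_ennreal) simp_all
  have incU: "U i t \<le> U j t" if "i \<le> j" for i j t using inc that by (simp add: incseq_def le_fun_def)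
  have i1: "(\<integral>\<^sup>+t. (\<Squnion> range U) t \<partial>Q x) = (SUP i. \<integral>\<^sup>+t. U i t \<partial>Q x)" if "x \<in> space M" for x
    unfolding SUP_apply
  proof (rule nn_integral_monotone_convergence_SUP)
    show "incseq U" by (rule inc)
    show "U i \<in> borel_measurable (Q x)" for i by (simp only: QM[OF Q that] Um)
  qed
  have i2: "(\<integral>\<^sup>+t. ennreal t * (\<Squnion> range U) t \<partial>Q x) = (SUP i. \<integral>\<^sup>+t. ennreal t * U i t \<partial>Q x)" if "x \<in> space M" for x
  proof -
    have "(\<integral>\<^sup>+t. ennreal t * (\<Squnion> range U) t \<partial>Q x) = (\<integral>\<^sup>+t. (SUP i. ennreal t * U i t) \<partial>Q x)"
      unfolding SUP_apply by (simp add: SUP_mult_left_ennreal)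
    also have "\<dots> = (SUP i. \<integral>\<^sup>+t. ennreal t * U i t \<partial>Q x)"
    proof (rule nn_integral_monotone_convergence_SUP)
      show "incseq (\<lambda>i t. ennreal t * U i t)"
        using incU by (auto simp: incseq_def le_fun_def intro!: mult_left_mono)
      show "(\<lambda>t. ennreal t * U i t) \<in> borel_measurable (Q x)" for i by (simp only: QM[OF Q that] Um2)
    qed
    finally show ?thesis .
  qed
  have "(\<integral>\<^sup>+x. g (\<phi> x) * (\<integral>\<^sup>+t. (\<Squnion> range U) t \<partial>Q x) \<partial>M)
      = (\<integral>\<^sup>+x. (SUP i. g (\<phi> x) * (\<integral>\<^sup>+t. U i t \<partial>Q x)) \<partial>M)"
  proof (rule nn_integral_cong)
    fix x assume x: "x \<in> space M"
    show "g (\<phi> x) * (\<integral>\<^sup>+t. (\<Squnion> range U) t \<partial>Q x) = (SUP i. g (\<phi> x) * (\<integral>\<^sup>+t. U i t \<partial>Q x))"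
      unfolding i1[OF x] by (rule SUP_mult_left_ennreal)
  qed
  also have "\<dots> = (SUP i. \<integral>\<^sup>+x. g (\<phi> x) * (\<integral>\<^sup>+t. U i t \<partial>Q x) \<partial>M)"
  proof (rule nn_integral_monotone_convergence_SUP)
    show "incseq (\<lambda>i x. g (\<phi> x) * (\<integral>\<^sup>+t. U i t \<partial>Q x))"
      using incU by (auto simp: incseq_def le_fun_def intro!: mult_left_mono nn_integral_mono)
  qed (rule mi1')
  also have "\<dots> = (SUP i. \<integral>\<^sup>+y. g y * (\<integral>\<^sup>+t. ennreal t * U i t \<partial>Q y) \<partial>M)"
    by (simp only: IH)
  also have "\<dots> = (\<integral>\<^sup>+y. (SUP i. g y * (\<integral>\<^sup>+t. ennreal t * U i t \<partial>Q y)) \<partial>M)"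
  proof (rule nn_integral_monotone_convergence_SUP[symmetric])
    show "incseq (\<lambda>i y. g y * (\<integral>\<^sup>+t. ennreal t * U i t \<partial>Q y))"
      using incU by (auto simp: incseq_def le_fun_def intro!: mult_left_mono nn_integral_mono)
  qed (rule mi2')
  also have "\<dots> = (\<integral>\<^sup>+y. g y * (\<integral>\<^sup>+t. ennreal t * (\<Squnion> range U) t \<partial>Q y) \<partial>M)"
  proof (rule nn_integral_cong)
    fix x assume x: "x \<in> space M"
    show "(SUP i. g x * (\<integral>\<^sup>+t. ennreal t * U i t \<partial>Q x)) = g x * (\<integral>\<^sup>+t. ennreal t * (\<Squnion> range U) t \<partial>Q x)"
      unfolding i2[OF x] by (rule SUP_mult_left_ennreal[symmetric])
  qed
  finally show ?thesis .
qed

lemma J: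
  assumes Q: "prob_family M Q" and CCQ: "CC M \<phi> Q"
    and hf: "AE x in M. h x \<noteq> \<infinity>" and hp: "AE x in M. h x \<noteq> 0"
    and g[measurable]: "g \<in> borel_measurable M" and u: "u \<in> borel_measurable Bor_Rplus"
  shows "(\<integral>\<^sup>+x. g (\<phi> x) * (\<integral>\<^sup>+t. u t \<partial>Q x) \<partial>M) = (\<integral>\<^sup>+y. g y * (\<integral>\<^sup>+t. ennreal t * u t \<partial>Q y) \<partial>M)"
  using u
proof (induction rule: borel_measurable_induct)
  case (cong f1 f2)
  show ?case by (rule J_cong[OF Q cong(3) cong(4)])
next
  case (set A)
  show ?case by (rule J_set[OF Q CCQ hf hp g set])
next
  case (mult u c)
  show ?case by (rule J_mult[OF Q g]) (insert mult, assumption)+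
next
  case (add u v)
  show ?case by (rule J_add[OF Q g]) (insert add, assumption)+
next
  case (seq U)
  show ?case by (rule J_seq[OF Q g]) (insert seq, assumption)+
qed

end

lemma point_dirac:
  assumes N: "prob_space N" and sN: "sets N = sets Bor_Rplus" and c: "0 \<le> c"
    and m1: "(\<integral>\<^sup>+t. ennreal t \<partial>N) = ennreal c"
    and m2: "(\<integral>\<^sup>+t. ennreal t * ennreal t \<partial>N) = ennreal (c * c)"
  shows "N = return Bor_Rplus c"
proof -
  interpret prob_space N by fact
  have sp: "space N = {0..}" using sets_eq_imp_space_eq[OF sN] by (simp add: space_restrict_space)
  have mt: "(\<lambda>t. ennreal t) \<in> borel_measurable N"
    unfolding measurable_cong_sets[OF sN refl] by (rule measurable_restrict_space1) simp
  have mt2: "(\<lambda>t. ennreal ((t - c)\<^sup>2)) \<in> borel_measurable N"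
    unfolding measurable_cong_sets[OF sN refl] by (rule measurable_restrict_space1) simp
  have pt: "ennreal ((t - c)\<^sup>2) + ennreal (2 * c) * ennreal t = ennreal t * ennreal t + ennreal (c * c)"
    if "t \<in> space N" for t
  proof -
    have t: "0 \<le> t" using that sp by auto
    have e1: "ennreal (2 * c) * ennreal t = ennreal (2 * c * t)" by (rule ennreal_mult[symmetric]) (use c t in auto)
    have e2: "ennreal ((t - c)\<^sup>2) + ennreal (2 * c * t) = ennreal ((t - c)\<^sup>2 + 2 * c * t)"
      by (rule ennreal_plus[symmetric]) (use c t in auto)
    have e3: "ennreal t * ennreal t = ennreal (t * t)" by (rule ennreal_mult[symmetric]) (use t in auto)
    have e4: "ennreal (t * t) + ennreal (c * c) = ennreal (t * t + c * c)"
      by (rule ennreal_plus[symmetric]) (use c t in auto)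
    have e5: "(t - c)\<^sup>2 + 2 * c * t = t * t + c * c" by (simp add: power2_eq_square algebra_simps)
    show ?thesis by (simp only: e1 e2 e3 e4 e5)
  qed
  have mt3: "(\<lambda>t. ennreal (2 * c) * ennreal t) \<in> borel_measurable N"
    unfolding measurable_cong_sets[OF sN refl] by (rule measurable_restrict_space1) simp
  have mtt: "(\<lambda>t. ennreal t * ennreal t) \<in> borel_measurable N"
    unfolding measurable_cong_sets[OF sN refl] by (rule measurable_restrict_space1) simp
  define X where "X = (\<integral>\<^sup>+t. ennreal ((t - c)\<^sup>2) \<partial>N)"
  define b where "b = ennreal (2 * c) * ennreal c"
  have "(\<integral>\<^sup>+t. ennreal ((t - c)\<^sup>2) + ennreal (2 * c) * ennreal t \<partial>N)
      = X + (\<integral>\<^sup>+t. ennreal (2 * c) * ennreal t \<partial>N)"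
    unfolding X_def by (rule nn_integral_add[OF mt2 mt3])
  also have "(\<integral>\<^sup>+t. ennreal (2 * c) * ennreal t \<partial>N) = ennreal (2 * c) * (\<integral>\<^sup>+t. ennreal t \<partial>N)"
    by (rule nn_integral_cmult[OF mt])
  finally have s1: "(\<integral>\<^sup>+t. ennreal ((t - c)\<^sup>2) + ennreal (2 * c) * ennreal t \<partial>N) = X + b"
    by (simp only: m1 b_def)
  have "(\<integral>\<^sup>+t. ennreal t * ennreal t + ennreal (c * c) \<partial>N)
      = (\<integral>\<^sup>+t. ennreal t * ennreal t \<partial>N) + (\<integral>\<^sup>+t. ennreal (c * c) \<partial>N)"
    by (rule nn_integral_add[OF mtt]) simp
  also have "\<dots> = ennreal (c * c) + ennreal (c * c)"
    by (simp only: m2 nn_integral_const emeasure_space_1 mult_1_right)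
  also have "\<dots> = ennreal (c * c + c * c)" by (rule ennreal_plus[symmetric]) (use c in auto)
  also have "\<dots> = ennreal (2 * c * c)" by (rule arg_cong[where f=ennreal]) simp
  also have "\<dots> = b" unfolding b_def by (rule ennreal_mult) (use c in auto)
  finally have s2: "(\<integral>\<^sup>+t. ennreal t * ennreal t + ennreal (c * c) \<partial>N) = b" .
  have s3: "(\<integral>\<^sup>+t. ennreal ((t - c)\<^sup>2) + ennreal (2 * c) * ennreal t \<partial>N) = (\<integral>\<^sup>+t. ennreal t * ennreal t + ennreal (c * c) \<partial>N)"
    by (rule nn_integral_cong) (rule pt)
  have XB: "X + b = b" by (rule trans[OF trans[OF s1[symmetric] s3] s2])
  have "b + X = b + 0" using XB by (simp add: ac_simps)
  moreover have "b \<noteq> \<infinity>"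
  proof -
    have "b = ennreal (2 * c * c)" unfolding b_def by (rule ennreal_mult[symmetric]) (use c in auto)
    then show ?thesis by simp
  qed
  ultimately have "(\<integral>\<^sup>+t. ennreal ((t - c)\<^sup>2) \<partial>N) = 0" unfolding X_def
    by (simp only: ennreal_add_left_cancel) simp
  then have "AE t in N. ennreal ((t - c)\<^sup>2) = 0" using mt2 by (simp add: nn_integral_0_iff_AE)
  then have ae: "AE t in N. t = c"
  proof eventually_elim
    case (elim t)
    then have "(t - c)\<^sup>2 \<le> 0" by simp
    then have "(t - c)\<^sup>2 = 0" using zero_le_power2[of "t - c"] by linarith
    then show "t = c" by simp
  qed
  show ?thesis
  proof (rule measure_eqI)
    show "sets N = sets (return Bor_Rplus c)" using sN by simp
    fix A assume A: "A \<in> sets N"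
    then have A': "A \<in> sets Bor_Rplus" using sN by simp
    show "emeasure N A = emeasure (return Bor_Rplus c) A"
    proof (cases "c \<in> A")
      case True
      have "AE t in N. (t \<in> A) = (t \<in> space N)" using ae AE_space by eventually_elim (use True sets.sets_into_space[OF A] in auto)
      then have "emeasure N A = emeasure N (space N)"
        using A by (intro emeasure_eq_AE) auto
      then show ?thesis using True A' by (simp add: emeasure_space_1)
    next
      case False
      have "AE t in N. (t \<in> A) = (t \<in> {})" using ae by eventually_elim (use False in auto)
      then have "emeasure N A = emeasure N {}"
        using A by (intro emeasure_eq_AE) auto
      then show ?thesis using False A' by simp
    qed
  qed
qed


context cs begin

lemma uniq:
  assumes qn: "quasinormal M (comp_op M \<phi>)" and Q: "prob_family M Q" and CCQ: "CC M \<phi> Q"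
  shows "AE x in M. Q x = return Bor_Rplus (hr x)"
proof -
  have hc: "AE x in M. h (\<phi> x) = h x" and hf: "AE x in M. h x \<noteq> \<infinity>" using hcomp[OF qn] by auto
  have hp: "AE x in M. h x \<noteq> 0" using AE_h_comp_pos hc by eventually_elim auto
  define m1 where "m1 y = (\<integral>\<^sup>+t. ennreal t \<partial>Q y)" for y
  define m2 where "m2 y = (\<integral>\<^sup>+t. ennreal t * ennreal t \<partial>Q y)" for y
  have tt: "(\<lambda>t. ennreal t * ennreal t) \<in> borel_measurable Bor_Rplus" by measurable
  have m1m[measurable]: "m1 \<in> borel_measurable M" unfolding m1_def[abs_def] by (rule nnQ_meas[OF Q ennreal_Bor])
  have m2m[measurable]: "m2 \<in> borel_measurable M" unfolding m2_def[abs_def] by (rule nnQ_meas[OF Q tt])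
  have one: "emeasure (Q x) (space (Q x)) = 1" if "x \<in> space M" for x
    using prob_space.emeasure_space_1[OF Q_sets(3)[OF Q that]] by simp
  have A1: "AE x in M. h x = m1 x"
  proof (rule sigma_finite_measure.density_unique2[OF sf h_meas m1m])
    fix A assume A[measurable]: "A \<in> sets M"
    have "(\<integral>\<^sup>+x. h x * indicator A x \<partial>M) = (\<integral>\<^sup>+x. indicator A (\<phi> x) \<partial>M)"
      by (rule CV[symmetric]) measurable
    also have "\<dots> = (\<integral>\<^sup>+x. indicator A (\<phi> x) * (\<integral>\<^sup>+t. 1 \<partial>Q x) \<partial>M)"
      by (rule nn_integral_cong) (simp add: one)
    also have "\<dots> = (\<integral>\<^sup>+y. indicator A y * (\<integral>\<^sup>+t. ennreal t * 1 \<partial>Q y) \<partial>M)"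
      by (rule J[OF Q CCQ hf hp, where u="\<lambda>_. 1"]) simp_all
    also have "\<dots> = (\<integral>\<^sup>+x. m1 x * indicator A x \<partial>M)"
      by (rule nn_integral_cong) (simp add: m1_def mult.commute)
    finally show "(\<integral>\<^sup>+x\<in>A. h x \<partial>M) = (\<integral>\<^sup>+x\<in>A. m1 x \<partial>M)" .
  qed
  have A2: "AE x in M. h x * h x = m2 x"
  proof (rule sigma_finite_measure.density_unique2[OF sf _ m2m])
    show "(\<lambda>x. h x * h x) \<in> borel_measurable M" by measurable
    fix A assume A[measurable]: "A \<in> sets M"
    have "(\<integral>\<^sup>+x. h x * h x * indicator A x \<partial>M) = (\<integral>\<^sup>+x. h x * (indicator A x * h x) \<partial>M)"
      by (rule nn_integral_cong) (simp add: ac_simps)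
    also have "\<dots> = (\<integral>\<^sup>+x. indicator A (\<phi> x) * h (\<phi> x) \<partial>M)"
      by (rule CV[symmetric]) measurable
    also have "\<dots> = (\<integral>\<^sup>+x. indicator A (\<phi> x) * (\<integral>\<^sup>+t. ennreal t \<partial>Q x) \<partial>M)"
    proof (rule nn_integral_cong_AE)
      show "AE x in M. indicator A (\<phi> x) * h (\<phi> x) = indicator A (\<phi> x) * (\<integral>\<^sup>+t. ennreal t \<partial>Q x)"
        using hc A1 by eventually_elim (simp add: m1_def)
    qed
    also have "\<dots> = (\<integral>\<^sup>+y. indicator A y * (\<integral>\<^sup>+t. ennreal t * ennreal t \<partial>Q y) \<partial>M)"
      by (rule J[OF Q CCQ hf hp _ ennreal_Bor]) simp
    also have "\<dots> = (\<integral>\<^sup>+x. m2 x * indicator A x \<partial>M)"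
      by (rule nn_integral_cong) (simp add: m2_def mult.commute)
    finally show "(\<integral>\<^sup>+x\<in>A. h x * h x \<partial>M) = (\<integral>\<^sup>+x\<in>A. m2 x \<partial>M)" .
  qed
  from AE_space hf A1 A2 show ?thesis
  proof eventually_elim
    case (elim x)
    have hx: "h x = ennreal (hr x)" using elim(2) by (simp add: hr_def ennreal_enn2real_if)
    have hr0: "0 \<le> hr x" by (simp add: hr_def)
    show ?case
    proof (rule point_dirac[OF Q_sets(3)[OF Q elim(1)] Q_sets(1)[OF Q elim(1)] hr0])
      show "(\<integral>\<^sup>+t. ennreal t \<partial>Q x) = ennreal (hr x)" using elim(3) hx by (simp add: m1_def)
      have "ennreal (hr x * hr x) = h x * h x" using hx hr0 by (simp add: ennreal_mult)
      then show "(\<integral>\<^sup>+t. ennreal t * ennreal t \<partial>Q x) = ennreal (hr x * hr x)" using elim(4) by (simp add: m2_def)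
    qed
  qed
qed

end

theorem proposition10:
  fixes M :: "'a measure" and \<phi> :: "'a \<Rightarrow> 'a"
  assumes "sigma_finite_measure M"
    and "nonsingular M \<phi>"
    and "quasinormal M (comp_op M \<phi>)"
  shows "\<exists>P. prob_family (vimage_algebra (space M) \<phi> M) P \<and> CC M \<phi> P \<and>
           (\<forall>Q. prob_family M Q \<and> CC M \<phi> Q \<longrightarrow> (AE x in M. Q x = P x))"
proof -
  interpret cs M \<phi> by (rule cs.intro) (rule assms(1), rule assms(2))
  have hc: "AE x in M. h (\<phi> x) = h x" and hf: "AE x in M. h x \<noteq> \<infinity>" using hcomp[OF assms(3)] by auto
  define P where "P = (\<lambda>x. return Bor_Rplus (hr (\<phi> x)))"
  have hr0: "0 \<le> hr x" for x by (simp add: hr_def)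
  have sp: "hr y \<in> space Bor_Rplus" for y using hr0[of y] by (simp add: space_restrict_space)
  have Pe: "emeasure (P x) \<sigma> = indicator \<sigma> (hr (\<phi> x))" if "\<sigma> \<in> sets Bor_Rplus" for x \<sigma>
    unfolding P_def using that by (simp add: emeasure_return)
  have pm: "\<phi> \<in> vimage_algebra (space M) \<phi> M \<rightarrow>\<^sub>M M"
    by (rule measurable_vimage_algebra1) (use phi_space in auto)
  have Pm: "(\<lambda>x. emeasure (P x) \<sigma>) \<in> borel_measurable (vimage_algebra (space M) \<phi> M)"
    if s: "\<sigma> \<in> sets Bor_Rplus" for \<sigma>
  proof -
    have sb[measurable]: "\<sigma> \<in> sets borel" using s by (subst (asm) sets_restrict_space_iff) auto
    have "(\<lambda>y. indicator \<sigma> (hr y) :: ennreal) \<in> borel_measurable M" by measurable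
    then have "(\<lambda>x. indicator \<sigma> (hr (\<phi> x)) :: ennreal) \<in> borel_measurable (vimage_algebra (space M) \<phi> M)"
      using measurable_compose[OF pm] by blast
    then show ?thesis by (simp add: Pe[OF s])
  qed
  have pf: "prob_family (vimage_algebra (space M) \<phi> M) P"
    unfolding prob_family_def
  proof (intro conjI ballI)
    fix x
    show "prob_space (P x)" unfolding P_def by (rule prob_space_return[OF sp])
    show "sets (P x) = sets Bor_Rplus" unfolding P_def by simp
  next
    fix \<sigma> assume "\<sigma> \<in> sets Bor_Rplus"
    then show "(\<lambda>x. emeasure (P x) \<sigma>) \<in> borel_measurable (vimage_algebra (space M) \<phi> M)" by (rule Pm)
  qed
  have cc: "CC M \<phi> P"
    unfolding CC_def
  proof (intro ballI exI conjI)
    fix \<sigma> assume s: "\<sigma> \<in> sets Bor_Rplus"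
    have sm: "(\<lambda>t. ennreal t * indicator \<sigma> t) \<in> borel_measurable Bor_Rplus" using s by measurable
    show "is_cond_exp M \<phi> (\<lambda>x. emeasure (P x) \<sigma>) (\<lambda>x. emeasure (P x) \<sigma>)"
      unfolding is_cond_exp_def using Pm[OF s] by simp
    show "AE x in M. emeasure (P x) \<sigma> = cdiv (\<integral>\<^sup>+t\<in>\<sigma>. ennreal t \<partial>(P (\<phi> x))) (h_phi M \<phi> (\<phi> x))"
      using AE_comp[OF hc] AE_comp[OF hf] AE_h_comp_pos
    proof eventually_elim
      case (elim x)
      define r where "r = hr (\<phi> x)"
      have r0: "0 \<le> r" unfolding r_def by (rule hr0)
      have hx: "h (\<phi> x) = ennreal r" using elim(2) by (simp add: r_def hr_def ennreal_enn2real_if)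
      have rr: "hr (\<phi> (\<phi> x)) = r" using elim(1) by (simp add: r_def hr_def)
      have rpos: "ennreal r \<noteq> 0" using elim(3) hx by simp
      have "(\<integral>\<^sup>+t\<in>\<sigma>. ennreal t \<partial>(P (\<phi> x))) = ennreal r * indicator \<sigma> r"
        unfolding P_def rr using sp[of "\<phi> x"] by (subst nn_integral_return) (simp_all add: r_def sm)
      then have "cdiv (\<integral>\<^sup>+t\<in>\<sigma>. ennreal t \<partial>(P (\<phi> x))) (h_phi M \<phi> (\<phi> x)) = indicator \<sigma> r"
        using rpos hx by (simp add: cdiv_def h_def[symmetric] mult.commute[of "ennreal r"] ennreal_mult_divide_eq)
      then show ?case using Pe[OF s] by (simp add: r_def)
    qed
  qed
  have un: "AE x in M. Q x = P x" if Q: "prob_family M Q" and CCQ: "CC M \<phi> Q" for Q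
    using uniq[OF assms(3) Q CCQ] hc
  proof eventually_elim
    case (elim x)
    then show ?case by (simp add: P_def hr_def)
  qed
  show ?thesis using pf cc un by blast
qed

end
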